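(* Let $f_1,\dots,f_n\colon\mathbb R\to\mathbb R$ and $\eta\colon\mathbb R\times\mathbb R\to(0,\infty)$ be smooth with $\eta(x,0)=1$, and consider the metric $(\star)$ on $\mathbb R^{n+2}$, with scalar curvature $\mathrm{Scal}(x,u)=-2\eta_{uu}/\eta$. Let $k_\gamma(x)=-\eta_u(x,0)$. If $\mathrm{Scal}<0$ everywhere and there is $\varepsilon>0$ such that $|k_\gamma(x)|\le(1-\varepsilon)\sqrt{\tfrac12|\mathrm{Scal}(x,u)|}$ for all $x,u$, then the metric is complete.
   Context: The metric $(\star)$: on $\mathbb R\times\mathbb R^{n+1}$ with coordinates $(x,u,v_1,\dots,v_n)$, conventions $v_0=u$, $v_{-1}=v_{n+1}=0$, $f_0=f_{n+1}=0$, $g_{\eta,f}=\eta(x,u)^2dx^2+\sum_{j=0}^n\big(dv_j+(v_{j-1}f_j(x)-v_{j+1}f_{j+1}(x))dx\big)^2$. $k_\gamma$ is the geodesic curvature of $\gamma(x)=(x,0,\dots,0)$. *)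

theory Defs
  imports "HOL-Analysis.Analysis"
begin

definition smooth1 :: "(real \<Rightarrow> real) \<Rightarrow> bool" where
  "smooth1 h \<longleftrightarrow> (\<forall>k x. ((deriv ^^ k) h) differentiable (at x))"

text \<open>Iterated partial derivatives of a function of two real variables (x,u):
  True = derivative in x, False = derivative in u.\<close>
fun pd :: "bool list \<Rightarrow> (real \<Rightarrow> real \<Rightarrow> real) \<Rightarrow> real \<Rightarrow> real \<Rightarrow> real" where
  "pd [] h = h"
| "pd (True # ds) h = (\<lambda>x u. deriv (\<lambda>y. pd ds h y u) x)"
| "pd (False # ds) h = (\<lambda>x u. deriv (\<lambda>v. pd ds h x v) u)"

definition smooth2 :: "(real \<Rightarrow> real \<Rightarrow> real) \<Rightarrow> bool" where
  "smooth2 h \<longleftrightarrow> (\<forall>ds.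
      continuous_on UNIV (\<lambda>p. pd ds h (fst p) (snd p)) \<and>
      (\<forall>x u. (\<lambda>y. pd ds h y u) differentiable (at x) \<and>
             (\<lambda>v. pd ds h x v) differentiable (at u)))"

text \<open>A point of R x R^(n+1) is encoded as p :: nat => real with
  p 0 = x, p (j+1) = v_j (j = 0..n, v_0 = u), and p k = 0 for k > n+1.\<close>

definition pts :: "nat \<Rightarrow> (nat \<Rightarrow> real) set" where
  "pts n = {p. \<forall>k>Suc n. p k = 0}"

text \<open>f_j for j = 1..n; the conventions f_0 = f_(n+1) = 0.\<close>
definition fc :: "nat \<Rightarrow> (nat \<Rightarrow> real \<Rightarrow> real) \<Rightarrow> nat \<Rightarrow> real \<Rightarrow> real" where
  "fc n f j x = (if 1 \<le> j \<and> j \<le> n then f j x else 0)"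

text \<open>v_j of a point, with v_(-1) = v_(n+1) = 0 (j is an int index).\<close>
definition vc :: "nat \<Rightarrow> (nat \<Rightarrow> real) \<Rightarrow> int \<Rightarrow> real" where
  "vc n p j = (if 0 \<le> j \<and> j \<le> int n then p (Suc (nat j)) else 0)"

text \<open>The quadratic form g_{eta,f} at point p applied to the tangent vector w
  (w 0 = dx, w (j+1) = dv_j).\<close>
definition gform :: "nat \<Rightarrow> (real \<Rightarrow> real \<Rightarrow> real) \<Rightarrow> (nat \<Rightarrow> real \<Rightarrow> real)
      \<Rightarrow> (nat \<Rightarrow> real) \<Rightarrow> (nat \<Rightarrow> real) \<Rightarrow> real" where
  "gform n \<eta> f p w =
     (\<eta> (p 0) (p 1))\<^sup>2 * (w 0)\<^sup>2 +
     (\<Sum>j\<le>n. (w (Suc j) + (vc n p (int j - 1) * fc n f j (p 0)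
                            - vc n p (int j + 1) * fc n f (Suc j) (p 0)) * w 0)\<^sup>2)"

definition adm_curve :: "nat \<Rightarrow> (real \<Rightarrow> nat \<Rightarrow> real) \<Rightarrow> bool" where
  "adm_curve n c \<longleftrightarrow>
     (\<forall>t\<in>{0..1}. c t \<in> pts n) \<and>
     (\<forall>k\<le>Suc n. (\<lambda>t. c t k) C1_differentiable_on {0..1})"

definition curve_length :: "nat \<Rightarrow> (real \<Rightarrow> real \<Rightarrow> real) \<Rightarrow> (nat \<Rightarrow> real \<Rightarrow> real)
      \<Rightarrow> (real \<Rightarrow> nat \<Rightarrow> real) \<Rightarrow> real" where
  "curve_length n \<eta> f c =
     integral {0..1} (\<lambda>t. sqrt (gform n \<eta> f (c t)
        (\<lambda>k. vector_derivative (\<lambda>s. c s k) (at t within {0..1}))))"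

definition rdist :: "nat \<Rightarrow> (real \<Rightarrow> real \<Rightarrow> real) \<Rightarrow> (nat \<Rightarrow> real \<Rightarrow> real)
      \<Rightarrow> (nat \<Rightarrow> real) \<Rightarrow> (nat \<Rightarrow> real) \<Rightarrow> real" where
  "rdist n \<eta> f p q =
     Inf {curve_length n \<eta> f c | c. adm_curve n c \<and> c 0 = p \<and> c 1 = q}"

definition metric_complete :: "nat \<Rightarrow> (real \<Rightarrow> real \<Rightarrow> real) \<Rightarrow> (nat \<Rightarrow> real \<Rightarrow> real) \<Rightarrow> bool" where
  "metric_complete n \<eta> f \<longleftrightarrow>
     (\<forall>s :: nat \<Rightarrow> nat \<Rightarrow> real. (\<forall>i. s i \<in> pts n) \<longrightarrow>
        (\<forall>e>0. \<exists>N. \<forall>i\<ge>N. \<forall>j\<ge>N. rdist n \<eta> f (s i) (s j) < e) \<longrightarrow>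
        (\<exists>q\<in>pts n. (\<lambda>i. rdist n \<eta> f (s i) q) \<longlonglongrightarrow> 0))"

definition eta_u :: "(real \<Rightarrow> real \<Rightarrow> real) \<Rightarrow> real \<Rightarrow> real \<Rightarrow> real" where
  "eta_u \<eta> x u = deriv (\<lambda>v. \<eta> x v) u"

definition eta_uu :: "(real \<Rightarrow> real \<Rightarrow> real) \<Rightarrow> real \<Rightarrow> real \<Rightarrow> real" where
  "eta_uu \<eta> x u = deriv (\<lambda>v. eta_u \<eta> x v) u"

definition Scal :: "(real \<Rightarrow> real \<Rightarrow> real) \<Rightarrow> real \<Rightarrow> real \<Rightarrow> real" where
  "Scal \<eta> x u = - 2 * eta_uu \<eta> x u / \<eta> x u"

text \<open>Geodesic curvature of gamma(x) = (x,0,...,0): k_gamma(x) = - eta_u(x,0).\<close>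
definition k_gamma :: "(real \<Rightarrow> real \<Rightarrow> real) \<Rightarrow> real \<Rightarrow> real" where
  "k_gamma \<eta> x = - eta_u \<eta> x 0"

end

theory Submission
  imports Defs
begin


lemma lower_pos_right:
  fixes \<phi> \<psi> \<xi> :: "real \<Rightarrow> real" and b u :: real
  assumes d1: "\<And>u. (\<phi> has_real_derivative \<psi> u) (at u)"
    and d2: "\<And>u. (\<psi> has_real_derivative \<xi> u) (at u)"
    and pos: "\<And>u. \<phi> u > 0" and p2: "\<And>u. \<xi> u > 0" and one: "\<phi> 0 = 1"
    and b: "0 \<le> b" "b < 1" and hb: "\<And>u. (\<psi> 0)\<^sup>2 * \<phi> u \<le> b * \<xi> u"
    and u: "0 \<le> u"
  shows "sqrt (1-b) \<le> \<phi> u"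
proof -
  have mono1: "\<psi> a \<le> \<psi> c" if "a \<le> c" for a c
    using deriv_nonneg_imp_mono[of a c \<psi> \<xi>] d2 p2 that by (meson less_imp_le)
  have monophi: "\<phi> a \<le> \<phi> c" if "a \<le> c" "\<psi> a \<ge> 0" for a c
    using deriv_nonneg_imp_mono[of a c \<phi> \<psi>] d1 that mono1 by (meson atLeastAtMost_iff order_trans)
  have s1: "sqrt (1-b) \<le> 1" using b by simp
  show ?thesis
  proof (cases "\<psi> 0 \<ge> 0")
    case True
    then show ?thesis using monophi[OF u True] one s1 by linarith
  next
    case False
    define k2 where "k2 = (\<psi> 0)\<^sup>2"
    have k2pos: "k2 > 0" using False unfolding k2_def by simp
    have key: "sqrt (1-b) \<le> \<phi> m" if m: "0 \<le> m" "\<psi> m \<le> 0" for m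
    proof -
      define E where "E s = b * (\<psi> s)\<^sup>2 - k2 * (\<phi> s)\<^sup>2" for s
      have dE: "(E has_real_derivative (2 * \<psi> s * (b * \<xi> s - k2 * \<phi> s))) (at s)" for s
        unfolding E_def
        by (rule derivative_eq_intros d1 d2 refl | simp)+ (simp add: algebra_simps)
      have "E m \<le> E 0"
      proof (rule deriv_nonpos_imp_antimono[OF dE])
        fix s assume s: "s \<in> {0..m}"
        have "\<psi> s \<le> 0" using mono1[of s m] s m by auto
        moreover have "b * \<xi> s - k2 * \<phi> s \<ge> 0" using hb[of s] unfolding k2_def by simp
        ultimately show "2 * \<psi> s * (b * \<xi> s - k2 * \<phi> s) \<le> 0"
          by (simp add: mult_nonpos_nonneg)
      qed (use m in auto)
      then have "b * (\<psi> m)\<^sup>2 - k2 * (\<phi> m)\<^sup>2 \<le> b * k2 - k2" unfolding E_def k2_def one by simp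
      moreover have "b * (\<psi> m)\<^sup>2 \<ge> 0" using b by simp
      ultimately have "k2 * (1 - b) \<le> k2 * (\<phi> m)\<^sup>2" by (simp add: algebra_simps)
      then have "1 - b \<le> (\<phi> m)\<^sup>2" using k2pos by simp
      then have "sqrt (1-b) \<le> sqrt ((\<phi> m)\<^sup>2)" by (rule real_sqrt_le_mono)
      then show ?thesis using pos[of m] by simp
    qed
    show ?thesis
    proof (cases "\<psi> u \<le> 0")
      case True then show ?thesis using key u by blast
    next
      case F2: False
      have "continuous_on {0..u} \<psi>"
        using d2 by (meson DERIV_isCont continuous_at_imp_continuous_on)
      then obtain m where m: "0 \<le> m" "m \<le> u" "\<psi> m = 0"
        using IVT'[of \<psi> 0 0 u] False F2 u by auto
      have "sqrt (1-b) \<le> \<phi> m" using key m by simp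
      also have "\<phi> m \<le> \<phi> u" using monophi[of m u] m by simp
      finally show ?thesis .
    qed
  qed
qed


lemma lower_pos_all:
  fixes \<phi> \<psi> \<xi> :: "real \<Rightarrow> real" and b u :: real
  assumes d1: "\<And>u. (\<phi> has_real_derivative \<psi> u) (at u)"
    and d2: "\<And>u. (\<psi> has_real_derivative \<xi> u) (at u)"
    and pos: "\<And>u. \<phi> u > 0" and p2: "\<And>u. \<xi> u > 0" and one: "\<phi> 0 = 1"
    and b: "0 \<le> b" "b < 1" and hb: "\<And>u. (\<psi> 0)\<^sup>2 * \<phi> u \<le> b * \<xi> u"
  shows "sqrt (1-b) \<le> \<phi> u"
proof (cases "0 \<le> u")
  case True then show ?thesis using lower_pos_right[OF d1 d2 pos p2 one b hb] by blast
next
  case False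
  have "sqrt (1-b) \<le> (\<lambda>s. \<phi> (-s)) (-u)"
  proof (rule lower_pos_right[where \<phi>="\<lambda>s. \<phi> (-s)" and u="-u" and \<psi>="\<lambda>s. - \<psi> (-s)" and \<xi>="\<lambda>s. \<xi> (-s)"])
    fix s
    show "((\<lambda>s. \<phi> (-s)) has_real_derivative - \<psi> (-s)) (at s)"
      using DERIV_chain2[OF d1[of "-s"] DERIV_minus[OF DERIV_ident]] by simp
    show "((\<lambda>s. - \<psi> (-s)) has_real_derivative \<xi> (-s)) (at s)"
      using DERIV_minus[OF DERIV_chain2[OF d2[of "-s"] DERIV_minus[OF DERIV_ident]]] by simp
    show "(- \<psi> (-0))\<^sup>2 * \<phi> (-s) \<le> b * \<xi> (-s)" using hb[of "-s"] by simp
  qed (use pos p2 one b False in auto)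
  then show ?thesis by simp
qed

lemma eta_lower:
  fixes \<eta> :: "real \<Rightarrow> real \<Rightarrow> real" and \<epsilon> :: real
  assumes eta_smooth: "smooth2 \<eta>"
    and eta_pos: "\<forall>x u. \<eta> x u > 0"
    and eta_one: "\<forall>x. \<eta> x 0 = 1"
    and scal_neg: "\<forall>x u. Scal \<eta> x u < 0"
    and eps: "\<epsilon> > 0"
    and bound: "\<forall>x u. \<bar>k_gamma \<eta> x\<bar> \<le> (1 - \<epsilon>) * sqrt (\<bar>Scal \<eta> x u\<bar> / 2)"
  shows "\<exists>c>0. \<forall>x u. c \<le> \<eta> x u"
proof -
  define b where "b = (if \<epsilon> < 1 then (1-\<epsilon>)\<^sup>2 else 0)"
  have "\<epsilon> < 1 \<Longrightarrow> (1-\<epsilon>)*(1-\<epsilon>) < 1*1" by (rule mult_strict_mono) (use eps in auto)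
  then have b: "0 \<le> b" "b < 1" unfolding b_def using eps by (auto simp: power2_eq_square)
  have "sqrt (1-b) \<le> \<eta> x u" for x u
  proof (rule lower_pos_all[where \<phi>="\<lambda>u. \<eta> x u" and \<psi>="eta_u \<eta> x" and \<xi>="eta_uu \<eta> x", OF _ _ _ _ _ b])
    fix u
    have "(\<lambda>v. pd [] \<eta> x v) differentiable (at u)" using eta_smooth unfolding smooth2_def by blast
    then show "((\<lambda>u. \<eta> x u) has_real_derivative eta_u \<eta> x u) (at u)"
      unfolding eta_u_def by (simp add: DERIV_deriv_iff_real_differentiable)
    have "(\<lambda>v. pd [False] \<eta> x v) differentiable (at u)" using eta_smooth unfolding smooth2_def by blast
    then show "(eta_u \<eta> x has_real_derivative eta_uu \<eta> x u) (at u)"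
      unfolding eta_uu_def eta_u_def by (simp add: DERIV_deriv_iff_real_differentiable)
    have ep: "\<eta> x u > 0" using eta_pos by blast
    have "Scal \<eta> x u < 0" using scal_neg by blast
    then have uu: "eta_uu \<eta> x u > 0" using ep unfolding Scal_def
      by (simp add: zero_less_divide_iff)
    then show "eta_uu \<eta> x u > 0" .
    show "\<eta> x u > 0" by (rule ep)
    have sc: "\<bar>Scal \<eta> x u\<bar> / 2 = eta_uu \<eta> x u / \<eta> x u"
      unfolding Scal_def using uu ep by simp
    have bd: "\<bar>eta_u \<eta> x 0\<bar> \<le> (1 - \<epsilon>) * sqrt (eta_uu \<eta> x u / \<eta> x u)"
      using bound sc unfolding k_gamma_def by (metis abs_minus_cancel)
    show "(eta_u \<eta> x 0)\<^sup>2 * \<eta> x u \<le> b * eta_uu \<eta> x u"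
    proof (cases "\<epsilon> < 1")
      case True
      have "(eta_u \<eta> x 0)\<^sup>2 = \<bar>eta_u \<eta> x 0\<bar>\<^sup>2" by simp
      also have "\<dots> \<le> ((1 - \<epsilon>) * sqrt (eta_uu \<eta> x u / \<eta> x u))\<^sup>2"
        by (rule power_mono[OF bd]) simp
      also have "\<dots> = (1-\<epsilon>)\<^sup>2 * (eta_uu \<eta> x u / \<eta> x u)"
        using uu ep by (simp add: power_mult_distrib)
      finally have "(eta_u \<eta> x 0)\<^sup>2 * \<eta> x u \<le> (1-\<epsilon>)\<^sup>2 * (eta_uu \<eta> x u / \<eta> x u) * \<eta> x u"
        using ep by (intro mult_right_mono) auto
      then show ?thesis using True ep unfolding b_def by (simp add: field_simps)
    next
      case False
      have "(1 - \<epsilon>) * sqrt (eta_uu \<eta> x u / \<eta> x u) \<le> 0"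
        using False uu ep by (simp add: mult_nonpos_nonneg)
      then have "eta_u \<eta> x 0 = 0" using bd by simp
      then show ?thesis using False unfolding b_def by simp
    qed
  qed (use eta_pos eta_one in auto)
  moreover have "sqrt (1-b) > 0" using b by simp
  ultimately show ?thesis by blast
qed



lemma gform_cong:
  assumes "\<And>k. k \<le> Suc n \<Longrightarrow> w k = w' k"
  shows "gform n \<eta> f p w = gform n \<eta> f p w'"
  unfolding gform_def using assms by (intro arg_cong2[where f="(+)"] sum.cong) auto

definition bterm where
  "bterm n f p w j = w (Suc j) + (vc n p (int j - 1) * fc n f j (p 0)
                            - vc n p (int j + 1) * fc n f (Suc j) (p 0)) * w 0"

lemma gform_bterm: "gform n \<eta> f p w = (\<eta> (p 0) (p 1) * w 0)\<^sup>2 + (\<Sum>j\<le>n. (bterm n f p w j)\<^sup>2)"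
  unfolding gform_def bterm_def by (simp add: power_mult_distrib)

lemma gform_nonneg: "0 \<le> gform n \<eta> f p w"
  unfolding gform_bterm by (intro add_nonneg_nonneg sum_nonneg) auto

lemma P1: "\<bar>\<eta> (p 0) (p 1) * w 0\<bar> \<le> sqrt (gform n \<eta> f p w)"
proof -
  have "(\<eta> (p 0) (p 1) * w 0)\<^sup>2 \<le> gform n \<eta> f p w"
    unfolding gform_bterm by (simp add: sum_nonneg)
  then have "sqrt ((\<eta> (p 0) (p 1) * w 0)\<^sup>2) \<le> sqrt (gform n \<eta> f p w)" by (rule real_sqrt_le_mono)
  then show ?thesis by simp
qed

lemma Pb: assumes "j \<le> n" shows "\<bar>bterm n f p w j\<bar> \<le> sqrt (gform n \<eta> f p w)"
proof -
  have "(bterm n f p w j)\<^sup>2 \<le> (\<Sum>j\<le>n. (bterm n f p w j)\<^sup>2)"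
    by (rule member_le_sum) (use assms in auto)
  then have "(bterm n f p w j)\<^sup>2 \<le> gform n \<eta> f p w"
    unfolding gform_bterm by (smt (verit) zero_le_power2)
  then have "sqrt ((bterm n f p w j)\<^sup>2) \<le> sqrt (gform n \<eta> f p w)" by (rule real_sqrt_le_mono)
  then show ?thesis by simp
qed

lemma Pbsum: "sqrt (\<Sum>j\<le>n. (bterm n f p w j)\<^sup>2) \<le> sqrt (gform n \<eta> f p w)"
  unfolding gform_bterm by (rule real_sqrt_le_mono) simp

lemma telescope0:
  "(\<Sum>j\<le>n. p (Suc j) * (vc n p (int j - 1) * fc n f j x - vc n p (int j + 1) * fc n f (Suc j) x)) = 0"
proof -
  define h where "h j = vc n p (int j - 1) * vc n p (int j) * fc n f j x" for j
  have "(\<Sum>j\<le>n. p (Suc j) * (vc n p (int j - 1) * fc n f j x - vc n p (int j + 1) * fc n f (Suc j) x))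
      = (\<Sum>j\<le>n. h j - h (Suc j))"
  proof (rule sum.cong)
    fix j assume j: "j \<in> {..n}"
    have "vc n p (int j) = p (Suc j)" using j unfolding vc_def by auto
    moreover have "int (Suc j) - 1 = int j" by simp
    moreover have "int (Suc j) = int j + 1" by simp
    ultimately show "p (Suc j) * (vc n p (int j - 1) * fc n f j x - vc n p (int j + 1) * fc n f (Suc j) x) = h j - h (Suc j)"
      unfolding h_def by (simp add: algebra_simps)
  qed simp
  also have "\<dots> = h 0 - h (Suc n)" by (rule sum_telescope)
  also have "\<dots> = 0" unfolding h_def fc_def by simp
  finally show ?thesis .
qed

lemma P2: "\<bar>\<Sum>j\<le>n. p (Suc j) * w (Suc j)\<bar> \<le> sqrt (\<Sum>j\<le>n. (p (Suc j))\<^sup>2) * sqrt (gform n \<eta> f p w)"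
proof -
  have "(\<Sum>j\<le>n. p (Suc j) * w (Suc j)) = (\<Sum>j\<le>n. p (Suc j) * bterm n f p w j)
     - w 0 * (\<Sum>j\<le>n. p (Suc j) * (vc n p (int j - 1) * fc n f j (p 0) - vc n p (int j + 1) * fc n f (Suc j) (p 0)))"
    unfolding bterm_def by (simp add: algebra_simps sum.distrib sum_distrib_left sum_subtractf)
  also have "\<dots> = (\<Sum>j\<le>n. p (Suc j) * bterm n f p w j)" using telescope0 by simp
  finally have eq: "(\<Sum>j\<le>n. p (Suc j) * w (Suc j)) = (\<Sum>j\<le>n. p (Suc j) * bterm n f p w j)" .
  have "\<bar>\<Sum>j\<le>n. p (Suc j) * bterm n f p w j\<bar> \<le> (\<Sum>j\<le>n. \<bar>p (Suc j)\<bar> * \<bar>bterm n f p w j\<bar>)"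
    by (metis (no_types, lifting) abs_mult sum.cong sum_abs)
  also have "\<dots> \<le> L2_set (\<lambda>j. p (Suc j)) {..n} * L2_set (bterm n f p w) {..n}"
    by (rule L2_set_mult_ineq)
  also have "\<dots> \<le> sqrt (\<Sum>j\<le>n. (p (Suc j))\<^sup>2) * sqrt (gform n \<eta> f p w)"
    unfolding L2_set_def by (intro mult_left_mono Pbsum) (auto intro: sum_nonneg)
  finally show ?thesis using eq by simp
qed

lemma P3:
  assumes j: "j \<le> n" and R: "\<And>k. k \<le> Suc n \<Longrightarrow> \<bar>p k\<bar> \<le> R" and M: "\<And>i. 1 \<le> i \<Longrightarrow> i \<le> n \<Longrightarrow> \<bar>f i (p 0)\<bar> \<le> M"
    and R0: "0 \<le> R" and M0: "0 \<le> M"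
  shows "\<bar>w (Suc j)\<bar> \<le> sqrt (gform n \<eta> f p w) + 2 * R * M * \<bar>w 0\<bar>"
proof -
  have vb: "\<bar>vc n p i\<bar> \<le> R" for i unfolding vc_def using R R0 by auto
  have fb: "\<bar>fc n f i (p 0)\<bar> \<le> M" for i unfolding fc_def using M M0 by auto
  have "\<bar>vc n p (int j - 1) * fc n f j (p 0) - vc n p (int j + 1) * fc n f (Suc j) (p 0)\<bar>
     \<le> \<bar>vc n p (int j - 1)\<bar> * \<bar>fc n f j (p 0)\<bar> + \<bar>vc n p (int j + 1)\<bar> * \<bar>fc n f (Suc j) (p 0)\<bar>"
    by (metis abs_mult abs_triangle_ineq4)
  also have "\<dots> \<le> R * M + R * M"
    by (intro add_mono mult_mono vb fb) (use R0 in auto)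
  finally have cb: "\<bar>vc n p (int j - 1) * fc n f j (p 0) - vc n p (int j + 1) * fc n f (Suc j) (p 0)\<bar> \<le> 2 * R * M"
    by (simp add: algebra_simps)
  have "w (Suc j) = bterm n f p w j - (vc n p (int j - 1) * fc n f j (p 0) - vc n p (int j + 1) * fc n f (Suc j) (p 0)) * w 0"
    unfolding bterm_def by simp
  then have "\<bar>w (Suc j)\<bar> \<le> \<bar>bterm n f p w j\<bar> + \<bar>vc n p (int j - 1) * fc n f j (p 0) - vc n p (int j + 1) * fc n f (Suc j) (p 0)\<bar> * \<bar>w 0\<bar>"
    by (metis abs_mult abs_triangle_ineq4)
  also have "\<dots> \<le> sqrt (gform n \<eta> f p w) + 2 * R * M * \<bar>w 0\<bar>"
    by (intro add_mono Pb j mult_right_mono cb) auto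
  finally show ?thesis .
qed



definition Dc :: "(real \<Rightarrow> nat \<Rightarrow> real) \<Rightarrow> nat \<Rightarrow> real \<Rightarrow> real" where
  "Dc c k t = vector_derivative (\<lambda>s. c s k) (at t)"

definition Gc where
  "Gc n \<eta> f c t = sqrt (gform n \<eta> f (c t) (\<lambda>k. Dc c k t))"

lemma curve_D:
  assumes "adm_curve n c" "k \<le> Suc n"
  shows "\<And>t. t \<in> {0..1} \<Longrightarrow> ((\<lambda>s. c s k) has_real_derivative Dc c k t) (at t)"
    and "continuous_on {0..1} (Dc c k)"
    and "continuous_on {0..1} (\<lambda>t. c t k)"
proof -
  have C1: "(\<lambda>t. c t k) C1_differentiable_on {0..1}" using assms unfolding adm_curve_def by blast
  then have dif: "\<forall>t\<in>{0..1}. (\<lambda>s. c s k) differentiable at t"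
    and cd: "continuous_on {0..1} (\<lambda>t. vector_derivative (\<lambda>s. c s k) (at t))"
    unfolding C1_differentiable_on_eq by auto
  show "((\<lambda>s. c s k) has_real_derivative Dc c k t) (at t)" if "t \<in> {0..1}" for t
    using dif that unfolding Dc_def
    by (simp add: has_real_derivative_iff_has_vector_derivative vector_derivative_works[symmetric])
  show "continuous_on {0..1} (Dc c k)" using cd unfolding Dc_def by simp
  show "continuous_on {0..1} (\<lambda>t. c t k)"
    using dif by (meson continuous_at_imp_continuous_on differentiable_imp_continuous_within)
qed

lemma length_eq:
  assumes "adm_curve n c"
  shows "curve_length n \<eta> f c = integral {0..1} (Gc n \<eta> f c)"
  unfolding curve_length_def Gc_def
proof (rule integral_cong)
  fix t :: real assume t: "t \<in> {0..1}"
  show "sqrt (gform n \<eta> f (c t) (\<lambda>k. vector_derivative (\<lambda>s. c s k) (at t within {0..1}))) =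
        sqrt (gform n \<eta> f (c t) (\<lambda>k. Dc c k t))"
  proof (intro arg_cong[where f=sqrt] gform_cong)
    fix k assume k: "k \<le> Suc n"
    have "((\<lambda>s. c s k) has_vector_derivative Dc c k t) (at t)"
      using curve_D(1)[OF assms k t] by (simp add: has_real_derivative_iff_has_vector_derivative)
    then show "vector_derivative (\<lambda>s. c s k) (at t within {0..1}) = Dc c k t"
      using t by (intro vector_derivative_at_within_ivl) auto
  qed
qed

lemma vc_cont:
  assumes "\<And>k. k \<le> Suc n \<Longrightarrow> continuous_on S (\<lambda>t. c t k)"
  shows "continuous_on S (\<lambda>t. vc n (c t) i)"
  unfolding vc_def using assms by (cases "0 \<le> i \<and> i \<le> int n") auto

lemma fc_cont:
  assumes "\<And>j. 1 \<le> j \<Longrightarrow> j \<le> n \<Longrightarrow> continuous_on UNIV (f j)" "continuous_on S X"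
  shows "continuous_on S (\<lambda>t. fc n f j (X t))"
  unfolding fc_def using assms by (cases "1 \<le> j \<and> j \<le> n") (auto intro: continuous_on_compose2)

lemma G_cont:
  assumes adm: "adm_curve n c"
    and etac: "continuous_on UNIV (\<lambda>q. \<eta> (fst q) (snd q))"
    and fcont: "\<And>j. 1 \<le> j \<Longrightarrow> j \<le> n \<Longrightarrow> continuous_on UNIV (f j)"
  shows "continuous_on {0..1} (Gc n \<eta> f c)"
proof -
  have cc: "\<And>k. k \<le> Suc n \<Longrightarrow> continuous_on {0..1} (\<lambda>t. c t k)" using curve_D(3)[OF adm] by blast
  have dc: "\<And>k. k \<le> Suc n \<Longrightarrow> continuous_on {0..1} (Dc c k)" using curve_D(2)[OF adm] by blast
  have e: "continuous_on {0..1} (\<lambda>t. \<eta> (c t 0) (c t 1))"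
  proof -
    have "continuous_on {0..1} (\<lambda>t. (c t 0, c t 1))" using cc by (intro continuous_intros) auto
    from continuous_on_compose2[OF etac this] show ?thesis by simp
  qed
  have x: "continuous_on {0..1} (\<lambda>t. c t 0)" using cc by simp
  show ?thesis unfolding Gc_def gform_def
    by (intro continuous_intros e vc_cont cc fc_cont[OF fcont x] dc) auto
qed

lemma ftc_bound:
  fixes F F' H :: "real \<Rightarrow> real"
  assumes d: "\<And>s. s \<in> {0..1} \<Longrightarrow> (F has_real_derivative F' s) (at s)"
    and b: "\<And>s. s \<in> {0..1} \<Longrightarrow> \<bar>F' s\<bar> \<le> H s"
    and H: "continuous_on {0..1} H" and t: "t \<in> {0..1}"
  shows "\<bar>F t - F 0\<bar> \<le> integral {0..1} H"
proof -
  have sub: "{0..t} \<subseteq> {0..1}" using t by auto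
  have Hnn: "0 \<le> H s" if "s \<in> {0..1}" for s using b[OF that] by linarith
  have "(F' has_integral (F t - F 0)) {0..t}"
    by (rule fundamental_theorem_of_calculus)
       (use t sub d in \<open>auto simp: has_real_derivative_iff_has_vector_derivative intro: has_vector_derivative_at_within\<close>)
  note Fi = this
  have Hi: "(H has_integral integral {0..t} H) {0..t}"
    using continuous_on_subset[OF H sub] by (intro integrable_integral integrable_continuous_real)
  have bb: "F' s \<le> H s" "- F' s \<le> H s" if "s \<in> {0..t}" for s
    using b[of s] that sub by auto
  have "F t - F 0 \<le> integral {0..t} H"
    by (rule has_integral_le[OF Fi Hi]) (use bb in auto)
  moreover have "-(F t - F 0) \<le> integral {0..t} H"
    by (rule has_integral_le[OF has_integral_neg[OF Fi] Hi]) (use bb in auto)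
  ultimately have "\<bar>F t - F 0\<bar> \<le> integral {0..t} H" by linarith
  also have "\<dots> \<le> integral {0..1} H"
    by (rule integral_subset_le[OF sub])
       (use continuous_on_subset[OF H sub] H Hnn in \<open>auto simp: integrable_continuous_real\<close>)
  finally show ?thesis .
qed



definition Nf :: "nat \<Rightarrow> (nat \<Rightarrow> real) \<Rightarrow> real" where
  "Nf n p = (\<Sum>j\<le>n. (p (Suc j))\<^sup>2)"

lemma Nf_nonneg: "0 \<le> Nf n p" unfolding Nf_def by (auto intro: sum_nonneg)

lemma coord_le_Nf: assumes "j \<le> n" shows "\<bar>p (Suc j)\<bar> \<le> sqrt (Nf n p + 1)"
proof -
  have "(p (Suc j))\<^sup>2 \<le> Nf n p" unfolding Nf_def by (rule member_le_sum) (use assms in auto)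
  then have "sqrt ((p (Suc j))\<^sup>2) \<le> sqrt (Nf n p + 1)" by (intro real_sqrt_le_mono) simp
  then show ?thesis by simp
qed

lemma Gc_nonneg: "0 \<le> Gc n \<eta> f c t" unfolding Gc_def by (simp add: gform_nonneg)

lemma CL1:
  assumes adm: "adm_curve n c" and G: "continuous_on {0..1} (Gc n \<eta> f c)"
    and cpos: "0 < ce" and cle: "\<forall>x u. ce \<le> \<eta> x u" and t: "t \<in> {0..1}"
  shows "ce * \<bar>c t 0 - c 0 0\<bar> \<le> integral {0..1} (Gc n \<eta> f c)"
proof -
  have "\<bar>(\<lambda>s. ce * c s 0) t - (\<lambda>s. ce * c s 0) 0\<bar> \<le> integral {0..1} (Gc n \<eta> f c)"
  proof (rule ftc_bound[OF _ _ G t])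
    fix s :: real assume s: "s \<in> {0..1}"
    show "((\<lambda>s. ce * c s 0) has_real_derivative ce * Dc c 0 s) (at s)"
      using curve_D(1)[OF adm _ s, of 0] by (auto intro: DERIV_cmult)
    have "\<bar>ce * Dc c 0 s\<bar> \<le> \<bar>\<eta> (c s 0) (c s 1) * Dc c 0 s\<bar>"
      using cpos cle unfolding abs_mult by (intro mult_right_mono) (auto, metis abs_ge_self order_trans)
    also have "\<dots> \<le> Gc n \<eta> f c s" unfolding Gc_def using P1[of \<eta> "c s" "\<lambda>k. Dc c k s"] by simp
    finally show "\<bar>ce * Dc c 0 s\<bar> \<le> Gc n \<eta> f c s" .
  qed
  then show ?thesis using cpos by (simp add: abs_mult right_diff_distrib[symmetric])
qed

lemma CL2:
  assumes adm: "adm_curve n c" and G: "continuous_on {0..1} (Gc n \<eta> f c)" and t: "t \<in> {0..1}"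
  shows "\<bar>sqrt (Nf n (c t) + 1) - sqrt (Nf n (c 0) + 1)\<bar> \<le> integral {0..1} (Gc n \<eta> f c)"
proof (rule ftc_bound[OF _ _ G t])
  fix s :: real assume s: "s \<in> {0..1}"
  define g' where "g' = (\<Sum>j\<le>n. 2 * c s (Suc j) * Dc c (Suc j) s)"
  have pos: "0 < Nf n (c s) + 1" using Nf_nonneg[of n "c s"] by linarith
  have dg: "((\<lambda>s. Nf n (c s) + 1) has_real_derivative g') (at s)"
    unfolding Nf_def g'_def
    by (rule derivative_eq_intros DERIV_sum curve_D(1)[OF adm _ s] refl | simp)+
       (simp add: algebra_simps)
  show "((\<lambda>s. sqrt (Nf n (c s) + 1)) has_real_derivative inverse (sqrt (Nf n (c s) + 1)) / 2 * g') (at s)"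
    using DERIV_chain2[OF DERIV_real_sqrt[OF pos] dg] by simp
  have "\<bar>g'\<bar> = 2 * \<bar>\<Sum>j\<le>n. c s (Suc j) * Dc c (Suc j) s\<bar>"
    unfolding g'_def by (simp add: sum_distrib_left[symmetric] mult.assoc abs_mult)
  also have "\<dots> \<le> 2 * (sqrt (Nf n (c s)) * Gc n \<eta> f c s)"
    using P2[where n=n and p="c s" and w="\<lambda>k. Dc c k s" and \<eta>=\<eta> and f=f] unfolding Gc_def Nf_def by simp
  also have "\<dots> \<le> 2 * (sqrt (Nf n (c s) + 1) * Gc n \<eta> f c s)"
    by (intro mult_left_mono mult_right_mono Gc_nonneg) auto
  finally have "\<bar>g'\<bar> \<le> 2 * (sqrt (Nf n (c s) + 1) * Gc n \<eta> f c s)" .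
  then show "\<bar>inverse (sqrt (Nf n (c s) + 1)) / 2 * g'\<bar> \<le> Gc n \<eta> f c s"
    using pos by (simp add: abs_mult field_simps)
qed

lemma CL3:
  assumes adm: "adm_curve n c" and G: "continuous_on {0..1} (Gc n \<eta> f c)"
    and cpos: "0 < ce" and cle: "\<forall>x u. ce \<le> \<eta> x u"
    and R: "\<forall>t\<in>{0..1}. \<forall>k\<le>Suc n. \<bar>c t k\<bar> \<le> R"
    and M: "\<forall>i x. 1 \<le> i \<longrightarrow> i \<le> n \<longrightarrow> \<bar>x\<bar> \<le> R \<longrightarrow> \<bar>f i x\<bar> \<le> M"
    and R0: "0 \<le> R" and M0: "0 \<le> M" and j: "j \<le> n"
  shows "\<bar>c 1 (Suc j) - c 0 (Suc j)\<bar> \<le> (1 + 2 * R * M / ce) * integral {0..1} (Gc n \<eta> f c)"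
proof -
  have "\<bar>c 1 (Suc j) - c 0 (Suc j)\<bar> \<le> integral {0..1} (\<lambda>s. (1 + 2 * R * M / ce) * Gc n \<eta> f c s)"
  proof (rule ftc_bound[where F="\<lambda>s. c s (Suc j)"])
    show "continuous_on {0..1} (\<lambda>s. (1 + 2 * R * M / ce) * Gc n \<eta> f c s)"
      by (intro continuous_intros G)
    fix s :: real assume s: "s \<in> {0..1}"
    show "((\<lambda>s. c s (Suc j)) has_real_derivative Dc c (Suc j) s) (at s)"
      using curve_D(1)[OF adm _ s, of "Suc j"] j by simp
    have "\<bar>Dc c (Suc j) s\<bar> \<le> Gc n \<eta> f c s + 2 * R * M * \<bar>Dc c 0 s\<bar>"
      unfolding Gc_def
      by (rule P3[OF j _ _ R0 M0]) (use R M s in auto)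
    also have "ce * \<bar>Dc c 0 s\<bar> \<le> Gc n \<eta> f c s"
    proof -
      have "ce * \<bar>Dc c 0 s\<bar> \<le> \<bar>\<eta> (c s 0) (c s 1) * Dc c 0 s\<bar>"
        using cpos cle unfolding abs_mult by (intro mult_right_mono) (auto, metis abs_ge_self order_trans)
      also have "\<dots> \<le> Gc n \<eta> f c s" unfolding Gc_def using P1[of \<eta> "c s" "\<lambda>k. Dc c k s"] by simp
      finally show ?thesis .
    qed
    then have "2 * R * M * \<bar>Dc c 0 s\<bar> \<le> 2 * R * M * (Gc n \<eta> f c s / ce)"
      using cpos R0 M0 by (intro mult_left_mono) (auto simp: field_simps)
    finally show "\<bar>Dc c (Suc j) s\<bar> \<le> (1 + 2 * R * M / ce) * Gc n \<eta> f c s"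
      by (simp add: algebra_simps)
  qed (use zero_le_one in simp)
  then show ?thesis by simp
qed



definition seg :: "(nat \<Rightarrow> real) \<Rightarrow> (nat \<Rightarrow> real) \<Rightarrow> real \<Rightarrow> nat \<Rightarrow> real" where
  "seg p q t = (\<lambda>k. p k + t * (q k - p k))"

lemma seg_deriv: "((\<lambda>s. seg p q s k) has_real_derivative (q k - p k)) (at t)"
  unfolding seg_def by (rule derivative_eq_intros refl | simp)+

lemma seg_adm:
  assumes "p \<in> pts n" "q \<in> pts n"
  shows "adm_curve n (seg p q)" "seg p q 0 = p" "seg p q 1 = q"
proof -
  show "seg p q 0 = p" "seg p q 1 = q" unfolding seg_def by auto
  have "(\<lambda>t. seg p q t k) C1_differentiable_on {0..1}" for k
    unfolding C1_differentiable_on_def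
    by (rule exI[of _ "\<lambda>_. q k - p k"])
       (simp add: seg_deriv has_real_derivative_iff_has_vector_derivative[symmetric])
  moreover have "seg p q t \<in> pts n" for t using assms unfolding pts_def seg_def by auto
  ultimately show "adm_curve n (seg p q)" unfolding adm_curve_def by auto
qed

lemma Dc_seg: "Dc (seg p q) k t = q k - p k"
  unfolding Dc_def
  by (rule vector_derivative_at) (simp add: seg_deriv has_real_derivative_iff_has_vector_derivative[symmetric])

lemma coefb:
  assumes R: "\<And>k. k \<le> Suc n \<Longrightarrow> \<bar>p k\<bar> \<le> R" and M: "\<And>i. 1 \<le> i \<Longrightarrow> i \<le> n \<Longrightarrow> \<bar>f i (p 0)\<bar> \<le> M"
    and R0: "0 \<le> R" and M0: "0 \<le> M"
  shows "\<bar>vc n p (int j - 1) * fc n f j (p 0) - vc n p (int j + 1) * fc n f (Suc j) (p 0)\<bar> \<le> 2 * R * M"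
proof -
  have vb: "\<bar>vc n p i\<bar> \<le> R" for i unfolding vc_def using R R0 by auto
  have fb: "\<bar>fc n f i (p 0)\<bar> \<le> M" for i unfolding fc_def using M M0 by auto
  have "\<bar>vc n p (int j - 1) * fc n f j (p 0) - vc n p (int j + 1) * fc n f (Suc j) (p 0)\<bar>
     \<le> \<bar>vc n p (int j - 1)\<bar> * \<bar>fc n f j (p 0)\<bar> + \<bar>vc n p (int j + 1)\<bar> * \<bar>fc n f (Suc j) (p 0)\<bar>"
    by (metis abs_mult abs_triangle_ineq4)
  also have "\<dots> \<le> R * M + R * M"
    by (intro add_mono mult_mono vb fb) (use R0 in auto)
  finally show ?thesis by (simp add: algebra_simps)
qed

lemma gform_bound:
  assumes R: "\<And>k. k \<le> Suc n \<Longrightarrow> \<bar>p k\<bar> \<le> R" and M: "\<And>i. 1 \<le> i \<Longrightarrow> i \<le> n \<Longrightarrow> \<bar>f i (p 0)\<bar> \<le> M"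
    and E: "\<bar>\<eta> (p 0) (p 1)\<bar> \<le> E"
    and R0: "0 \<le> R" and M0: "0 \<le> M"
  shows "sqrt (gform n \<eta> f p w) \<le> (E + real (Suc n) * (1 + 2 * R * M)) * (\<Sum>k\<le>Suc n. \<bar>w k\<bar>)"
proof -
  define S where "S = (\<Sum>k\<le>Suc n. \<bar>w k\<bar>)"
  have wS: "\<bar>w k\<bar> \<le> S" if "k \<le> Suc n" for k
    unfolding S_def by (rule member_le_sum[where f="\<lambda>k. \<bar>w k\<bar>"]) (use that in auto)
  have S0: "0 \<le> S" unfolding S_def by (auto intro: sum_nonneg)
  have "sqrt (gform n \<eta> f p w) \<le> sqrt ((\<eta> (p 0) (p 1) * w 0)\<^sup>2) + sqrt (\<Sum>j\<le>n. (bterm n f p w j)\<^sup>2)"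
    unfolding gform_bterm by (rule sqrt_add_le_add_sqrt) (auto intro: sum_nonneg)
  also have "sqrt ((\<eta> (p 0) (p 1) * w 0)\<^sup>2) \<le> E * S"
  proof -
    have "\<bar>\<eta> (p 0) (p 1) * w 0\<bar> \<le> E * S" unfolding abs_mult
      by (rule mult_mono[OF E wS]) (use S0 E in auto)
    then show ?thesis by simp
  qed
  also have "sqrt (\<Sum>j\<le>n. (bterm n f p w j)\<^sup>2) \<le> (\<Sum>j\<le>n. \<bar>bterm n f p w j\<bar>)"
    using L2_set_le_sum_abs[of "bterm n f p w" "{..n}"] unfolding L2_set_def .
  also have "\<dots> \<le> real (card {..n}) * (S + 2 * R * M * S)"
  proof (rule sum_bounded_above)
    fix j assume j: "j \<in> {..n}"
    have "\<bar>bterm n f p w j\<bar> \<le> \<bar>w (Suc j)\<bar> + \<bar>vc n p (int j - 1) * fc n f j (p 0) - vc n p (int j + 1) * fc n f (Suc j) (p 0)\<bar> * \<bar>w 0\<bar>"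
      unfolding bterm_def by (metis abs_mult abs_triangle_ineq)
    also have "\<dots> \<le> S + 2 * R * M * S"
      by (intro add_mono mult_mono coefb[where n=n and p=p and f=f and j=j, OF R M R0 M0] wS) (use j R0 M0 in auto)
    finally show "\<bar>bterm n f p w j\<bar> \<le> S + 2 * R * M * S" .
  qed
  finally show ?thesis unfolding S_def[symmetric] by (simp add: algebra_simps)
qed

lemma curve_length_nonneg: "0 \<le> curve_length n \<eta> f c"
  unfolding curve_length_def
  by (cases "(\<lambda>t. sqrt (gform n \<eta> f (c t) (\<lambda>k. vector_derivative (\<lambda>s. c s k) (at t within {0..1})))) integrable_on {0..1}")
     (auto intro!: integral_nonneg simp: not_integrable_integral gform_nonneg)

lemma rdist_nonneg:
  assumes "p \<in> pts n" "q \<in> pts n"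
  shows "0 \<le> rdist n \<eta> f p q"
  unfolding rdist_def
  by (rule cInf_greatest) (use seg_adm[OF assms] curve_length_nonneg in auto)

lemma rdist_le:
  assumes "adm_curve n c" "c 0 = p" "c 1 = q"
  shows "rdist n \<eta> f p q \<le> curve_length n \<eta> f c"
  unfolding rdist_def
proof (rule cInf_lower)
  show "bdd_below {curve_length n \<eta> f c |c. adm_curve n c \<and> c 0 = p \<and> c 1 = q}"
    by (rule bdd_belowI[where m=0]) (auto simp: curve_length_nonneg)
qed (use assms in auto)

lemma rdist_lt:
  assumes "p \<in> pts n" "q \<in> pts n" "rdist n \<eta> f p q < z"
  shows "\<exists>c. adm_curve n c \<and> c 0 = p \<and> c 1 = q \<and> curve_length n \<eta> f c < z"
  using cInf_lessD[of "{curve_length n \<eta> f c | c. adm_curve n c \<and> c 0 = p \<and> c 1 = q}" z]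
    assms seg_adm[OF assms(1,2)] unfolding rdist_def by blast

lemma seg_length:
  assumes p: "p \<in> pts n" and q: "q \<in> pts n"
    and etac: "continuous_on UNIV (\<lambda>q. \<eta> (fst q) (snd q))"
    and fcont: "\<And>j. 1 \<le> j \<Longrightarrow> j \<le> n \<Longrightarrow> continuous_on UNIV (f j)"
    and Rp: "\<And>k. k \<le> Suc n \<Longrightarrow> \<bar>p k\<bar> \<le> R" and Rq: "\<And>k. k \<le> Suc n \<Longrightarrow> \<bar>q k\<bar> \<le> R"
    and M: "\<forall>i x. 1 \<le> i \<longrightarrow> i \<le> n \<longrightarrow> \<bar>x\<bar> \<le> R \<longrightarrow> \<bar>f i x\<bar> \<le> M"
    and E: "\<forall>x u. \<bar>x\<bar> \<le> R \<longrightarrow> \<bar>u\<bar> \<le> R \<longrightarrow> \<bar>\<eta> x u\<bar> \<le> E"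
    and R0: "0 \<le> R" and M0: "0 \<le> M"
  shows "rdist n \<eta> f p q \<le> (E + real (Suc n) * (1 + 2 * R * M)) * (\<Sum>k\<le>Suc n. \<bar>q k - p k\<bar>)"
proof -
  note sa = seg_adm[OF p q]
  define B where "B = (E + real (Suc n) * (1 + 2 * R * M)) * (\<Sum>k\<le>Suc n. \<bar>q k - p k\<bar>)"
  have "rdist n \<eta> f p q \<le> curve_length n \<eta> f (seg p q)" by (rule rdist_le[OF sa])
  also have "\<dots> = integral {0..1} (Gc n \<eta> f (seg p q))" by (rule length_eq[OF sa(1)])
  also have "\<dots> \<le> integral {0..1} (\<lambda>_::real. B)"
  proof (rule integral_le)
    show "Gc n \<eta> f (seg p q) integrable_on {0..1}"
      by (rule integrable_continuous_real[OF G_cont[OF sa(1) etac fcont]])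
    fix t :: real assume t: "t \<in> {0..1}"
    have ck: "\<bar>seg p q t k\<bar> \<le> R" if "k \<le> Suc n" for k
    proof -
      have "seg p q t k = (1 - t) * p k + t * q k" unfolding seg_def by (simp add: algebra_simps)
      also have "\<bar>\<dots>\<bar> \<le> (1 - t) * R + t * R"
        using t Rp[OF that] Rq[OF that]
        by (intro order_trans[OF abs_triangle_ineq] add_mono) (auto simp: abs_mult intro: mult_left_mono)
      finally show ?thesis by (simp add: algebra_simps)
    qed
    show "Gc n \<eta> f (seg p q) t \<le> B"
      unfolding Gc_def Dc_seg B_def
      by (rule gform_bound) (use ck M E R0 M0 in auto)
  qed (rule integrable_const_ivl)
  also have "\<dots> = B" by simp
  finally show ?thesis unfolding B_def .
qed



lemma cont_bound:
  fixes g :: "'a::metric_space \<Rightarrow> real"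
  assumes "continuous_on S g" "compact S"
  shows "\<exists>B\<ge>0. \<forall>x\<in>S. \<bar>g x\<bar> \<le> B"
proof -
  have "bounded (g ` S)" using assms compact_continuous_image compact_imp_bounded by blast
  then obtain a where "\<forall>y\<in>g ` S. \<bar>y\<bar> \<le> a" unfolding bounded_real by blast
  then show ?thesis by (intro exI[of _ "max a 0"]) auto
qed

theorem main:
  fixes n :: nat and f :: "nat \<Rightarrow> real \<Rightarrow> real" and \<eta> :: "real \<Rightarrow> real \<Rightarrow> real" and ce :: real
  assumes etac: "continuous_on UNIV (\<lambda>q. \<eta> (fst q) (snd q))"
    and fcont: "\<And>j. 1 \<le> j \<Longrightarrow> j \<le> n \<Longrightarrow> continuous_on UNIV (f j)"
    and cpos: "0 < ce" and cle: "\<forall>x u. ce \<le> \<eta> x u"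
  shows "metric_complete n \<eta> f"
  unfolding metric_complete_def
proof (intro allI impI)
  fix s :: "nat \<Rightarrow> nat \<Rightarrow> real"
  assume spts: "\<forall>i. s i \<in> pts n"
    and cau: "\<forall>e>0. \<exists>N. \<forall>i\<ge>N. \<forall>j\<ge>N. rdist n \<eta> f (s i) (s j) < e"
  have Gc: "\<And>c. adm_curve n c \<Longrightarrow> continuous_on {0..1} (Gc n \<eta> f c)"
    by (rule G_cont[OF _ etac fcont])
  have t1: "(1::real) \<in> {0..1}" by simp
  obtain N0 where N0: "\<forall>i\<ge>N0. \<forall>j\<ge>N0. rdist n \<eta> f (s i) (s j) < 1" using cau by force
  define X0 where "X0 = \<bar>s N0 0\<bar> + 1 / ce"
  define Q0 where "Q0 = sqrt (Nf n (s N0) + 1) + 1"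
  have tail: "\<bar>s i 0\<bar> \<le> X0 \<and> sqrt (Nf n (s i) + 1) \<le> Q0" if i: "i \<ge> N0" for i
  proof -
    obtain c where c: "adm_curve n c" "c 0 = s N0" "c 1 = s i" "curve_length n \<eta> f c < 1"
      using rdist_lt[OF spts[rule_format] spts[rule_format]] N0 i by blast
    have L: "integral {0..1} (Gc n \<eta> f c) < 1" using c length_eq by metis
    have "ce * \<bar>c 1 0 - c 0 0\<bar> < 1" using CL1[OF c(1) Gc[OF c(1)] cpos cle t1] L by linarith
    then have "\<bar>s i 0 - s N0 0\<bar> \<le> 1 / ce" using cpos c by (simp add: field_simps)
    then have a: "\<bar>s i 0\<bar> \<le> X0" unfolding X0_def by linarith
    have "\<bar>sqrt (Nf n (c 1) + 1) - sqrt (Nf n (c 0) + 1)\<bar> < 1"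
      using CL2[OF c(1) Gc[OF c(1)] t1] L by linarith
    then have "\<bar>sqrt (Nf n (s i) + 1) - sqrt (Nf n (s N0) + 1)\<bar> < 1" using c(2,3) by simp
    then have "sqrt (Nf n (s i) + 1) \<le> Q0" unfolding Q0_def using c by linarith
    with a show ?thesis by blast
  qed
  define R where "R = max (X0 + 1 / ce) (Q0 + 1)"
  have R0: "0 \<le> R" unfolding R_def X0_def using cpos by (simp add: le_max_iff_disj)
  have sR: "\<bar>s i k\<bar> \<le> R" if "i \<ge> N0" "k \<le> Suc n" for i k
  proof (cases k)
    case 0
    have "0 < 1 / ce" using cpos by simp
    then have "\<bar>s i 0\<bar> \<le> X0 + 1 / ce" using tail[OF that(1)] by linarith
    then show ?thesis using 0 unfolding R_def by (simp add: le_max_iff_disj)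
  next
    case (Suc j)
    then have "\<bar>s i k\<bar> \<le> sqrt (Nf n (s i) + 1)" using coord_le_Nf[of j n "s i"] that by simp
    then show ?thesis using tail[OF that(1)] unfolding R_def by (simp add: le_max_iff_disj)
  qed
  have cR: "\<forall>t\<in>{0..1}. \<forall>k\<le>Suc n. \<bar>c t k\<bar> \<le> R"
    if i: "i \<ge> N0" and c: "adm_curve n c" "c 0 = s i" "curve_length n \<eta> f c < 1" for i c
  proof (intro ballI allI impI)
    fix t :: real and k assume t: "t \<in> {0..1}" and k: "k \<le> Suc n"
    have L: "integral {0..1} (Gc n \<eta> f c) < 1" using c length_eq by metis
    show "\<bar>c t k\<bar> \<le> R"
    proof (cases k)
      case 0
      have "ce * \<bar>c t 0 - c 0 0\<bar> < 1" using CL1[OF c(1) Gc[OF c(1)] cpos cle t] L by linarith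
      then have "\<bar>c t 0 - s i 0\<bar> \<le> 1 / ce" using cpos c by (simp add: field_simps)
      then have "\<bar>c t 0\<bar> \<le> X0 + 1 / ce" using tail[OF i] by linarith
      then show ?thesis using 0 unfolding R_def by (simp add: le_max_iff_disj)
    next
      case (Suc j)
      have "\<bar>sqrt (Nf n (c t) + 1) - sqrt (Nf n (c 0) + 1)\<bar> < 1"
        using CL2[OF c(1) Gc[OF c(1)] t] L by linarith
      then have "\<bar>sqrt (Nf n (c t) + 1) - sqrt (Nf n (s i) + 1)\<bar> < 1" using c(2) by simp
      then have "sqrt (Nf n (c t) + 1) \<le> Q0 + 1" using tail[OF i] by linarith
      moreover have "\<bar>c t k\<bar> \<le> sqrt (Nf n (c t) + 1)" using coord_le_Nf[of j n "c t"] Suc k by simp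
      ultimately show ?thesis unfolding R_def by (simp add: le_max_iff_disj)
    qed
  qed
  have "continuous_on {-R..R} (\<lambda>x. \<Sum>i\<in>{1..n}. \<bar>f i x\<bar>)"
    by (intro continuous_intros continuous_on_subset[OF fcont]) auto
  from cont_bound[OF this compact_Icc]
  obtain M where M0: "0 \<le> M" and Mb: "\<forall>x\<in>{-R..R}. \<bar>\<Sum>i\<in>{1..n}. \<bar>f i x\<bar>\<bar> \<le> M"
    by blast
  have M: "\<forall>i x. 1 \<le> i \<longrightarrow> i \<le> n \<longrightarrow> \<bar>x\<bar> \<le> R \<longrightarrow> \<bar>f i x\<bar> \<le> M"
  proof (intro allI impI)
    fix i x assume a: "1 \<le> i" "i \<le> n" "\<bar>x\<bar> \<le> R"
    have "\<bar>f i x\<bar> \<le> (\<Sum>i\<in>{1..n}. \<bar>f i x\<bar>)" by (rule member_le_sum) (use a in auto)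
    also have "\<dots> \<le> M" using Mb a(3) by (auto simp: abs_le_iff)
    finally show "\<bar>f i x\<bar> \<le> M" .
  qed
  obtain E where Eb: "\<forall>p\<in>{-R..R} \<times> {-R..R}. \<bar>\<eta> (fst p) (snd p)\<bar> \<le> E"
    using cont_bound[OF continuous_on_subset[OF etac subset_UNIV] compact_Times[OF compact_Icc compact_Icc]]
    by blast
  have E: "\<forall>x u. \<bar>x\<bar> \<le> R \<longrightarrow> \<bar>u\<bar> \<le> R \<longrightarrow> \<bar>\<eta> x u\<bar> \<le> E"
    using Eb by (auto simp: abs_le_iff)
  define K where "K = max (1 / ce) (1 + 2 * R * M / ce)"
  have Kpos: "0 < K" unfolding K_def using cpos by (simp add: less_max_iff_disj)
  have coordC: "Cauchy (\<lambda>i. s i k)" for k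
  proof (cases "k \<le> Suc n")
    case False
    then have "(\<lambda>i. s i k) = (\<lambda>i. 0)" using spts unfolding pts_def by auto
    then show ?thesis by (simp add: Cauchy_convergent_iff convergent_const)
  next
    case True
    show ?thesis
    proof (rule metric_CauchyI)
      fix e :: real assume e: "0 < e"
      have mpos: "0 < min 1 (e / K)" using e Kpos by simp
      obtain N where N: "\<forall>i\<ge>N. \<forall>j\<ge>N. rdist n \<eta> f (s i) (s j) < min 1 (e / K)"
        using cau mpos by blast
      show "\<exists>N'. \<forall>i\<ge>N'. \<forall>j\<ge>N'. dist (s i k) (s j k) < e"
      proof (intro exI[of _ "max N N0"] allI impI)
        fix i j assume ij: "max N N0 \<le> i" "max N N0 \<le> j"
        have iN: "N \<le> i" "N \<le> j" "N0 \<le> i" using ij by auto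
        have rl: "rdist n \<eta> f (s i) (s j) < min 1 (e / K)" using N iN by blast
        obtain c where c: "adm_curve n c" "c 0 = s i" "c 1 = s j" "curve_length n \<eta> f c < min 1 (e / K)"
          using rdist_lt[OF spts[rule_format] spts[rule_format] rl] by blast
        have c1: "curve_length n \<eta> f c < 1" using c(4) by simp
        define L where "L = integral {0..1} (Gc n \<eta> f c)"
        have L: "L < min 1 (e / K)" using c length_eq unfolding L_def by metis
        have L0: "0 \<le> L" using c(1) curve_length_nonneg length_eq unfolding L_def by metis
        have "L < e / K" using L by simp
        then have LK: "K * L < e" using Kpos by (simp add: less_divide_eq mult.commute)
        have "\<bar>s j k - s i k\<bar> \<le> K * L"
        proof (cases k)
          case 0
          have "ce * \<bar>c 1 0 - c 0 0\<bar> \<le> L" using CL1[OF c(1) Gc[OF c(1)] cpos cle t1] unfolding L_def .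
          then have "\<bar>s j 0 - s i 0\<bar> \<le> L / ce" using cpos c by (simp add: field_simps)
          also have "\<dots> = (1 / ce) * L" by simp
          also have "\<dots> \<le> K * L" unfolding K_def using L0 by (intro mult_right_mono) auto
          finally show ?thesis using 0 by simp
        next
          case (Suc jj)
          have "\<bar>c 1 (Suc jj) - c 0 (Suc jj)\<bar> \<le> (1 + 2 * R * M / ce) * L"
            unfolding L_def
            by (rule CL3[OF c(1) Gc[OF c(1)] cpos cle cR[OF iN(3) c(1,2) c1] M R0 M0])
               (use Suc True in simp)
          also have "\<dots> \<le> K * L" unfolding K_def using L0 by (intro mult_right_mono) auto
          finally show ?thesis using Suc c by simp
        qed
        then show "dist (s i k) (s j k) < e" using LK by (simp add: dist_real_def abs_minus_commute)
      qed
    qed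
  qed
  define q where "q k = lim (\<lambda>i. s i k)" for k
  have sq: "(\<lambda>i. s i k) \<longlonglongrightarrow> q k" for k
    unfolding q_def using coordC[of k] by (simp add: Cauchy_convergent_iff convergent_LIMSEQ_iff)
  have qpts: "q \<in> pts n"
    unfolding pts_def
  proof (intro CollectI allI impI)
    fix k assume k: "Suc n < k"
    then have "(\<lambda>i. s i k) = (\<lambda>i. 0)" using spts unfolding pts_def by auto
    then show "q k = 0" using sq[of k] LIMSEQ_unique tendsto_const by metis
  qed
  have qR: "\<bar>q k\<bar> \<le> R" if "k \<le> Suc n" for k
    by (rule LIMSEQ_le_const2[OF tendsto_rabs[OF sq[of k]]]) (use sR[OF _ that] in blast)
  define B where "B = E + real (Suc n) * (1 + 2 * R * M)"
  show "\<exists>q\<in>pts n. (\<lambda>i. rdist n \<eta> f (s i) q) \<longlonglongrightarrow> 0"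
  proof (rule bexI[OF _ qpts], rule tendsto_sandwich[of "\<lambda>_. 0" _ _ "\<lambda>i. B * (\<Sum>k\<le>Suc n. \<bar>q k - s i k\<bar>)"])
    show "\<forall>\<^sub>F i in sequentially. 0 \<le> rdist n \<eta> f (s i) q"
      using rdist_nonneg[OF spts[rule_format] qpts] by simp
    show "\<forall>\<^sub>F i in sequentially. rdist n \<eta> f (s i) q \<le> B * (\<Sum>k\<le>Suc n. \<bar>q k - s i k\<bar>)"
    proof (rule eventually_sequentiallyI[of N0])
      fix i assume i: "N0 \<le> i"
      show "rdist n \<eta> f (s i) q \<le> B * (\<Sum>k\<le>Suc n. \<bar>q k - s i k\<bar>)"
        unfolding B_def
        by (rule seg_length[OF spts[rule_format] qpts etac fcont _ _ M E R0 M0])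
           (simp_all add: sR[OF i] qR)
    qed
    show "(\<lambda>_. 0) \<longlonglongrightarrow> (0::real)" by simp
    have "(\<lambda>i. \<Sum>k\<le>Suc n. \<bar>q k - s i k\<bar>) \<longlonglongrightarrow> (\<Sum>k\<le>Suc n. \<bar>q k - q k\<bar>)"
      by (intro tendsto_intros sq)
    then have "(\<lambda>i. B * (\<Sum>k\<le>Suc n. \<bar>q k - s i k\<bar>)) \<longlonglongrightarrow> B * 0"
      by (intro tendsto_mult tendsto_const) simp
    then show "(\<lambda>i. B * (\<Sum>k\<le>Suc n. \<bar>q k - s i k\<bar>)) \<longlonglongrightarrow> 0" by simp
  qed
qed


theorem proposition3p4:
  fixes n :: nat and f :: "nat \<Rightarrow> real \<Rightarrow> real" and \<eta> :: "real \<Rightarrow> real \<Rightarrow> real"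
    and \<epsilon> :: real
  assumes f_smooth: "\<forall>j\<in>{1..n}. smooth1 (f j)"
    and eta_smooth: "smooth2 \<eta>"
    and eta_pos: "\<forall>x u. \<eta> x u > 0"
    and eta_one: "\<forall>x. \<eta> x 0 = 1"
    and scal_neg: "\<forall>x u. Scal \<eta> x u < 0"
    and eps: "\<epsilon> > 0"
    and bound: "\<forall>x u. \<bar>k_gamma \<eta> x\<bar> \<le> (1 - \<epsilon>) * sqrt (\<bar>Scal \<eta> x u\<bar> / 2)"
  shows "metric_complete n \<eta> f"
proof -
  obtain ce where cpos: "0 < ce" and cle: "\<forall>x u. ce \<le> \<eta> x u"
    using eta_lower[OF eta_smooth eta_pos eta_one scal_neg eps bound] by blast
  have etac: "continuous_on UNIV (\<lambda>q. \<eta> (fst q) (snd q))"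
    using eta_smooth unfolding smooth2_def by (metis pd.simps(1))
  have fcont: "continuous_on UNIV (f j)" if "1 \<le> j" "j \<le> n" for j
  proof -
    have "smooth1 (f j)" using f_smooth that by auto
    then have "\<forall>x. ((deriv ^^ 0) (f j)) differentiable (at x)" unfolding smooth1_def by blast
    then have "\<forall>x. f j differentiable (at x)" by simp
    then show ?thesis by (meson continuous_at_imp_continuous_on differentiable_imp_continuous_within)
  qed
  show ?thesis by (rule main[OF etac fcont cpos cle])
qed

end
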